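(* Let $P$ be a positive opetope and $I$ the one-dimensional positive opetope. The $\iota$-maps $P\to I$ that are surjective on faces are in bijective correspondence with the $1$-faces of $P$ lying in $P_1-\gamma(P_2)$.
   Context: A positive hypergraph $S$ consists of finite sets $S_k$ ($k\in\mathbb{N}$), only finitely many nonempty, functions $\gamma:S_{k+1}\to S_k$, and for each $k$ an assignment $\delta$ sending each $a\in S_{k+1}$ to a nonempty subset $\delta(a)\subseteq S_k$, with $\delta(a)$ a singleton for $a\in S_1$. A face is identified with its singleton; $\gamma(X)=\{\gamma(a):a\in X\}$, $\delta(X)=\bigcup_{a\in X}\delta(a)$. For $k>0$ the lower order $<^-$ on $S_k$ is the transitive closure of: $a\lhd b$ iff $\gamma(a)\in\delta(b)$. The upper order $<^+$ on $S_k$ is the transitive closure of: $a\lhd b$ iff there is $\alpha\in S_{k+1}$ with $a\in\delta(\alpha)$, $\gamma(\alpha)=b$; $a\perp^{\pm}b$ iff $a<^{\pm}b$ or $b<^{\pm}a$. A positive opetopic cardinal: $S_0\ne\emptyset$; globularity ($\gamma\gamma(a)=\gamma\delta(a)-\delta\delta(a)$, $\delta\gamma(a)=\delta\delta(a)-\gamma\delta(a)$ for $\dim a\ge2$); each $<^+$ a strict order, linear on $S_0$; for $k>0$, $\perp^-\cap\perp^+=\emptyset$ on $S_k$; for $x\in S_{k-1}$, $\{a:\gamma(a)=x\}$ and $\{a:x\in\delta(a)\}$ linearly ordered by $<^+$. A positive opetope: additionally $|P_m-\delta(P_{m+1})|\le1$ for all $m$. $\gamma^{(k)}(p)=p$ if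 $\dim p\le k$, else $\gamma^{(k)}(p)=\gamma(\gamma^{(k+1)}(p))$. An $\iota$-map $h:Q\to P$ of positive opetopes is a function on faces with: $\dim h(q)\le\dim q$; $h(\gamma^{(k)}(q))=\gamma^{(k)}(h(q))$ for $k\ge0$, $q\in Q_{k+1}$; and, with $\ker(h)=\{q:\dim q>\dim h(q)\}$, for $q\in Q_{k+1}$: if $\dim h(q)=k+1$, $h$ restricts to a bijection $\delta(q)-\ker(h)\to\delta(h(q))$; if $\dim h(q)=k$, to a bijection $\delta(q)-\ker(h)\to\{h(q)\}$; if $\dim h(q)<k$, $\delta(q)\subseteq\ker(h)$. $I$ denotes the positive opetope with $I_0=\{-,+\}$, $I_1=\{a\}$, $\delta(a)=\{-\}$, $\gamma(a)=+$, and no other faces. *)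

theory Defs
  imports "HOL-Library.FuncSet"
begin

text \<open>A positive hypergraph on a face type 'a: a finite set of faces, each with a
dimension, a target (gam) and a set of sources (del).\<close>

record 'a phg =
  faces :: "'a set"
  dim :: "'a \<Rightarrow> nat"
  gam :: "'a \<Rightarrow> 'a"
  del :: "'a \<Rightarrow> 'a set"

definition Sk :: "'a phg \<Rightarrow> nat \<Rightarrow> 'a set" where
  "Sk S k = {a \<in> faces S. dim S a = k}"

definition Del :: "'a phg \<Rightarrow> 'a set \<Rightarrow> 'a set" where
  "Del S X = (\<Union>a\<in>X. del S a)"

definition pos_hypergraph :: "'a phg \<Rightarrow> bool" where
  "pos_hypergraph S \<longleftrightarrow> finite (faces S) \<and>
     (\<forall>k. \<forall>a \<in> Sk S (Suc k).
        gam S a \<in> Sk S k \<and> del S a \<subseteq> Sk S k \<and> del S a \<noteq> {}) \<and>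
     (\<forall>a \<in> Sk S 1. \<exists>x. del S a = {x})"

definition lower_rel :: "'a phg \<Rightarrow> nat \<Rightarrow> ('a \<times> 'a) set" where
  "lower_rel S k = {(a, b). a \<in> Sk S k \<and> b \<in> Sk S k \<and> gam S a \<in> del S b}"

definition lower_lt :: "'a phg \<Rightarrow> nat \<Rightarrow> ('a \<times> 'a) set" where
  "lower_lt S k = (lower_rel S k)\<^sup>+"

definition upper_rel :: "'a phg \<Rightarrow> nat \<Rightarrow> ('a \<times> 'a) set" where
  "upper_rel S k = {(a, b). a \<in> Sk S k \<and> b \<in> Sk S k \<and>
      (\<exists>\<alpha> \<in> Sk S (Suc k). a \<in> del S \<alpha> \<and> gam S \<alpha> = b)}"

definition upper_lt :: "'a phg \<Rightarrow> nat \<Rightarrow> ('a \<times> 'a) set" where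
  "upper_lt S k = (upper_rel S k)\<^sup>+"

definition comparable :: "('a \<times> 'a) set \<Rightarrow> 'a \<Rightarrow> 'a \<Rightarrow> bool" where
  "comparable R a b \<longleftrightarrow> (a, b) \<in> R \<or> (b, a) \<in> R"

definition lin_ordered_by :: "('a \<times> 'a) set \<Rightarrow> 'a set \<Rightarrow> bool" where
  "lin_ordered_by R X \<longleftrightarrow> (\<forall>a \<in> X. \<forall>b \<in> X. a \<noteq> b \<longrightarrow> comparable R a b)"

definition pos_opetopic_cardinal :: "'a phg \<Rightarrow> bool" where
  "pos_opetopic_cardinal S \<longleftrightarrow> pos_hypergraph S \<and>
     Sk S 0 \<noteq> {} \<and>
     (\<forall>a \<in> faces S. dim S a \<ge> 2 \<longrightarrow>
        {gam S (gam S a)} = gam S ` del S a - Del S (del S a) \<and>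
        del S (gam S a) = Del S (del S a) - gam S ` del S a) \<and>
     (\<forall>k. irrefl_on (Sk S k) (upper_lt S k)) \<and>
     lin_ordered_by (upper_lt S 0) (Sk S 0) \<and>
     (\<forall>k > 0. \<forall>a \<in> Sk S k. \<forall>b \<in> Sk S k.
        \<not> (comparable (lower_lt S k) a b \<and> comparable (upper_lt S k) a b)) \<and>
     (\<forall>k. \<forall>x \<in> Sk S k.
        lin_ordered_by (upper_lt S (Suc k)) {a \<in> Sk S (Suc k). gam S a = x} \<and>
        lin_ordered_by (upper_lt S (Suc k)) {a \<in> Sk S (Suc k). x \<in> del S a})"

definition pos_opetope :: "'a phg \<Rightarrow> bool" where
  "pos_opetope P \<longleftrightarrow> pos_opetopic_cardinal P \<and>
     (\<forall>m. card (Sk P m - Del P (Sk P (Suc m))) \<le> 1)"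

text \<open>gamma^(k)(p) = p if dim p <= k, else gamma(gamma^(k+1)(p)); i.e. gamma iterated
  (dim p - k) times.\<close>
definition gamk :: "'a phg \<Rightarrow> nat \<Rightarrow> 'a \<Rightarrow> 'a" where
  "gamk S k p = (gam S ^^ (dim S p - k)) p"

definition ker :: "'b phg \<Rightarrow> 'a phg \<Rightarrow> ('b \<Rightarrow> 'a) \<Rightarrow> 'b set" where
  "ker Q P h = {q \<in> faces Q. dim P (h q) < dim Q q}"

definition iota_map :: "'b phg \<Rightarrow> 'a phg \<Rightarrow> ('b \<Rightarrow> 'a) \<Rightarrow> bool" where
  "iota_map Q P h \<longleftrightarrow>
     (\<forall>q \<in> faces Q. h q \<in> faces P) \<and>
     (\<forall>q \<in> faces Q. dim P (h q) \<le> dim Q q) \<and>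
     (\<forall>k. \<forall>q \<in> Sk Q (Suc k). h (gamk Q k q) = gamk P k (h q)) \<and>
     (\<forall>k. \<forall>q \<in> Sk Q (Suc k).
        (dim P (h q) = Suc k \<longrightarrow> bij_betw h (del Q q - ker Q P h) (del P (h q))) \<and>
        (dim P (h q) = k \<longrightarrow> bij_betw h (del Q q - ker Q P h) {h q}) \<and>
        (dim P (h q) < k \<longrightarrow> del Q q \<subseteq> ker Q P h))"

datatype I_face = IMinus | IPlus | IA

definition I_op :: "I_face phg" where
  "I_op = \<lparr> faces = {IMinus, IPlus, IA},
            dim = (\<lambda>x. if x = IA then 1 else 0),
            gam = (\<lambda>x. if x = IA then IPlus else x),
            del = (\<lambda>x. if x = IA then {IMinus} else {}) \<rparr>"

end

theory Submission
  imports Defs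
begin

locale poc =
  fixes P :: "'a phg"
  assumes C: "pos_opetopic_cardinal P"
begin

lemma HG: "pos_hypergraph P" using C unfolding pos_opetopic_cardinal_def by blast

lemma fin_faces: "finite (faces P)" using HG unfolding pos_hypergraph_def by blast

lemma Sk_faces: "x \<in> Sk P k \<Longrightarrow> x \<in> faces P" unfolding Sk_def by blast
lemma Sk_dim: "x \<in> Sk P k \<Longrightarrow> dim P x = k" unfolding Sk_def by blast
lemma Sk_I: "x \<in> faces P \<Longrightarrow> dim P x = k \<Longrightarrow> x \<in> Sk P k" unfolding Sk_def by blast
lemma fin_Sk: "finite (Sk P k)" using fin_faces unfolding Sk_def by simp

lemma gam_Sk: "a \<in> Sk P (Suc k) \<Longrightarrow> gam P a \<in> Sk P k"
  using HG unfolding pos_hypergraph_def by blast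
lemma del_Sk: "a \<in> Sk P (Suc k) \<Longrightarrow> del P a \<subseteq> Sk P k"
  using HG unfolding pos_hypergraph_def by blast

lemma gam_Sk1: "a \<in> Sk P 1 \<Longrightarrow> gam P a \<in> Sk P 0"
  using gam_Sk[of a 0] by simp
lemma gam_Sk2: "a \<in> Sk P 2 \<Longrightarrow> gam P a \<in> Sk P 1"
  using gam_Sk[of a 1] by (simp add: numeral_2_eq_2)
lemma del_Sk2: "a \<in> Sk P 2 \<Longrightarrow> del P a \<subseteq> Sk P 1"
  using del_Sk[of a 1] by (simp add: numeral_2_eq_2)

definition src :: "'a \<Rightarrow> 'a" where "src e = the_elem (del P e)"

lemma del1: "e \<in> Sk P 1 \<Longrightarrow> del P e = {src e}"
proof -
  assume "e \<in> Sk P 1"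
  then obtain x where "del P e = {x}" using HG unfolding pos_hypergraph_def by blast
  then show ?thesis unfolding src_def by simp
qed

lemma src_Sk: "e \<in> Sk P 1 \<Longrightarrow> src e \<in> Sk P 0"
  using del1[of e] del_Sk[of e 0] by auto

lemmas C' = C[unfolded pos_opetopic_cardinal_def]
lemmas ax_glob = C'[THEN conjunct2, THEN conjunct2, THEN conjunct1]
lemma ax_irr: "\<forall>k. irrefl_on (Sk P k) (upper_lt P k)"
  by (rule C'[THEN conjunct2, THEN conjunct2, THEN conjunct2, THEN conjunct1])
lemma ax_lin0: "lin_ordered_by (upper_lt P 0) (Sk P 0)"
  by (rule C'[THEN conjunct2, THEN conjunct2, THEN conjunct2, THEN conjunct2, THEN conjunct1])
lemma ax_disj: "\<forall>k > 0. \<forall>a \<in> Sk P k. \<forall>b \<in> Sk P k.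
        \<not> (comparable (lower_lt P k) a b \<and> comparable (upper_lt P k) a b)"
  by (rule C'[THEN conjunct2, THEN conjunct2, THEN conjunct2, THEN conjunct2, THEN conjunct2, THEN conjunct1])
lemma ax_lin: "\<forall>k. \<forall>x \<in> Sk P k.
        lin_ordered_by (upper_lt P (Suc k)) {a \<in> Sk P (Suc k). gam P a = x} \<and>
        lin_ordered_by (upper_lt P (Suc k)) {a \<in> Sk P (Suc k). x \<in> del P a}"
  by (rule C'[THEN conjunct2, THEN conjunct2, THEN conjunct2, THEN conjunct2, THEN conjunct2, THEN conjunct2])

lemma glob: assumes "a \<in> Sk P 2"
  shows "{gam P (gam P a)} = gam P ` del P a - Del P (del P a)"
    and "del P (gam P a) = Del P (del P a) - gam P ` del P a"
proof -
  have ax: "\<forall>a \<in> faces P. dim P a \<ge> 2 \<longrightarrow>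
        {gam P (gam P a)} = gam P ` del P a - Del P (del P a) \<and>
        del P (gam P a) = Del P (del P a) - gam P ` del P a"
    by (rule ax_glob)
  have "a \<in> faces P" "dim P a \<ge> 2" using assms unfolding Sk_def by auto
  then show "{gam P (gam P a)} = gam P ` del P a - Del P (del P a)"
    and "del P (gam P a) = Del P (del P a) - gam P ` del P a" using ax by auto
qed



lemma irr: "a \<in> Sk P k \<Longrightarrow> (a,a) \<notin> upper_lt P k"
  using ax_irr unfolding irrefl_on_def by blast

lemma lin0: "a \<in> Sk P 0 \<Longrightarrow> b \<in> Sk P 0 \<Longrightarrow> a \<noteq> b \<Longrightarrow>
   (a,b) \<in> upper_lt P 0 \<or> (b,a) \<in> upper_lt P 0"
  using ax_lin0 unfolding lin_ordered_by_def comparable_def by blast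

lemma disj: "0 < k \<Longrightarrow> a \<in> Sk P k \<Longrightarrow> b \<in> Sk P k \<Longrightarrow> comparable (lower_lt P k) a b
   \<Longrightarrow> comparable (upper_lt P k) a b \<Longrightarrow> False"
  using ax_disj by blast

lemma lin_gam: "x \<in> Sk P k \<Longrightarrow> a \<in> Sk P (Suc k) \<Longrightarrow> b \<in> Sk P (Suc k) \<Longrightarrow>
   gam P a = x \<Longrightarrow> gam P b = x \<Longrightarrow> a \<noteq> b \<Longrightarrow> comparable (upper_lt P (Suc k)) a b"
proof -
  assume a: "x \<in> Sk P k" "a \<in> Sk P (Suc k)" "b \<in> Sk P (Suc k)" "gam P a = x" "gam P b = x" "a \<noteq> b"
  have "lin_ordered_by (upper_lt P (Suc k)) {a \<in> Sk P (Suc k). gam P a = x}"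
    using ax_lin a(1) by blast
  then show ?thesis using a unfolding lin_ordered_by_def by blast
qed

lemma lin_del: "x \<in> Sk P k \<Longrightarrow> a \<in> Sk P (Suc k) \<Longrightarrow> b \<in> Sk P (Suc k) \<Longrightarrow>
   x \<in> del P a \<Longrightarrow> x \<in> del P b \<Longrightarrow> a \<noteq> b \<Longrightarrow> comparable (upper_lt P (Suc k)) a b"
proof -
  assume a: "x \<in> Sk P k" "a \<in> Sk P (Suc k)" "b \<in> Sk P (Suc k)" "x \<in> del P a" "x \<in> del P b" "a \<noteq> b"
  have "lin_ordered_by (upper_lt P (Suc k)) {a \<in> Sk P (Suc k). x \<in> del P a}"
    using ax_lin a(1) by blast
  then show ?thesis using a unfolding lin_ordered_by_def by blast
qed

lemma upper_sub: "upper_lt P k \<subseteq> Sk P k \<times> Sk P k"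
proof -
  have "upper_rel P k \<subseteq> Sk P k \<times> Sk P k" unfolding upper_rel_def by blast
  then show ?thesis unfolding upper_lt_def by (rule trancl_subset_Sigma)
qed

lemma upper_trans: "(a,b) \<in> upper_lt P k \<Longrightarrow> (b,c) \<in> upper_lt P k \<Longrightarrow> (a,c) \<in> upper_lt P k"
  unfolding upper_lt_def using trancl_trans by metis

lemma upper_irr: "(a,a) \<notin> upper_lt P k"
  using upper_sub irr by blast

lemma upper_gam: assumes "(c,d) \<in> upper_lt P k" shows "\<exists>\<alpha> \<in> Sk P (Suc k). gam P \<alpha> = d"
proof -
  from assms obtain y where "(y,d) \<in> upper_rel P k" unfolding upper_lt_def by (blast elim: tranclE)
  then show ?thesis unfolding upper_rel_def by blast
qed

lemma upper_wf: "wf (upper_lt P k)"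
proof (rule finite_acyclic_wf)
  show "finite (upper_lt P k)" using upper_sub fin_Sk by (meson finite_SigmaI finite_subset)
  show "acyclic (upper_lt P k)" unfolding acyclic_def upper_lt_def
    using upper_irr unfolding upper_lt_def by simp
qed

lemma upper_wf_conv: "wf ((upper_lt P k)\<inverse>)"
proof (rule finite_acyclic_wf_converse)
  show "finite (upper_lt P k)" using upper_sub fin_Sk by (meson finite_SigmaI finite_subset)
  show "acyclic (upper_lt P k)" unfolding acyclic_def upper_lt_def
    using upper_irr unfolding upper_lt_def by simp
qed

lemma upper_min: assumes "x \<in> X" shows "\<exists>m \<in> X. \<forall>y \<in> X. (y,m) \<notin> upper_lt P k"
proof -
  obtain z where "z \<in> X" "\<And>y. (y, z) \<in> upper_lt P k \<Longrightarrow> y \<notin> X"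
    using wfE_min[OF upper_wf[of k] assms] by metis
  then show ?thesis by metis
qed

lemma upper_max: assumes "x \<in> X" shows "\<exists>m \<in> X. \<forall>y \<in> X. (m,y) \<notin> upper_lt P k"
proof -
  obtain z where "z \<in> X" "\<And>y. (y, z) \<in> (upper_lt P k)\<inverse> \<Longrightarrow> y \<notin> X"
    using wfE_min[OF upper_wf_conv[of k] assms] by metis
  then show ?thesis by blast
qed

lemma edge_lt: "e \<in> Sk P 1 \<Longrightarrow> (src e, gam P e) \<in> upper_lt P 0"
  unfolding upper_lt_def upper_rel_def
  using src_Sk gam_Sk1 del1 by (intro r_into_trancl) force

definition SS :: "'a set" where "SS = Sk P 1 - gam P ` Sk P 2"

lemma lt_gamSS: "(c,d) \<in> upper_lt P 1 \<Longrightarrow> d \<notin> SS"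
  using upper_gam[of c d 1] unfolding SS_def by (auto simp: numeral_2_eq_2)

lemma SS_src_inj: assumes "a \<in> SS" "a' \<in> SS" "src a = src a'" shows "a = a'"
proof (rule ccontr)
  assume ne: "a \<noteq> a'"
  have a1: "a \<in> Sk P 1" "a' \<in> Sk P 1" using assms unfolding SS_def by auto
  have s1: "src a \<in> Sk P 0" "src a \<in> del P a" "src a \<in> del P a'"
    using del1[OF a1(1)] del1[OF a1(2)] assms(3) src_Sk[OF a1(1)] by auto
  have a1': "a \<in> Sk P (Suc 0)" "a' \<in> Sk P (Suc 0)" using a1 by auto
  have "comparable (upper_lt P (Suc 0)) a a'"
    by (rule lin_del[OF s1(1) a1' s1(2) s1(3) ne])
  then show False using lt_gamSS assms unfolding comparable_def by auto
qed

lemma SS_from: assumes "w \<in> Sk P 0" "(w, y) \<in> upper_lt P 0" shows "\<exists>a \<in> SS. src a = w"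
proof -
  from assms(2) obtain z where "(w,z) \<in> upper_rel P 0" unfolding upper_lt_def
    by (blast elim: converse_tranclE)
  then obtain e where e: "e \<in> Sk P 1" "w \<in> del P e" unfolding upper_rel_def by auto
  let ?X = "{e \<in> Sk P 1. w \<in> del P e}"
  obtain m where m: "m \<in> ?X" "\<forall>y \<in> ?X. (y,m) \<notin> upper_lt P 1"
    using upper_min[of e ?X 1] e by blast
  have "m \<notin> gam P ` Sk P 2"
  proof
    assume "m \<in> gam P ` Sk P 2"
    then obtain \<alpha> where al: "\<alpha> \<in> Sk P 2" "gam P \<alpha> = m" by auto
    have "w \<in> Del P (del P \<alpha>)" using glob(2)[OF al(1)] al(2) m(1) by auto
    then obtain e' where e': "e' \<in> del P \<alpha>" "w \<in> del P e'" unfolding Del_def by auto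
    have e'1: "e' \<in> Sk P 1" using del_Sk2[OF al(1)] e'(1) by auto
    have "(e', m) \<in> upper_rel P 1" unfolding upper_rel_def
      using e'1 m(1) al e'(1) by (auto simp: numeral_2_eq_2)
    then have "(e', m) \<in> upper_lt P 1" unfolding upper_lt_def by auto
    then show False using m e'1 e'(2) by auto
  qed
  then have "m \<in> SS" using m(1) unfolding SS_def by auto
  moreover have "src m = w" using del1[of m] m(1) by auto
  ultimately show ?thesis by blast
qed

lemma SS_into: assumes "w \<in> Sk P 0" "(x, w) \<in> upper_lt P 0" shows "\<exists>a \<in> SS. gam P a = w"
proof -
  from assms(2) obtain z where "(z,w) \<in> upper_rel P 0" unfolding upper_lt_def
    by (blast elim: tranclE)
  then obtain e where e: "e \<in> Sk P 1" "gam P e = w" unfolding upper_rel_def by auto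
  let ?X = "{e \<in> Sk P 1. gam P e = w}"
  obtain m where m: "m \<in> ?X" "\<forall>y \<in> ?X. (y,m) \<notin> upper_lt P 1"
    using upper_min[of e ?X 1] e by blast
  have "m \<notin> gam P ` Sk P 2"
  proof
    assume "m \<in> gam P ` Sk P 2"
    then obtain \<alpha> where al: "\<alpha> \<in> Sk P 2" "gam P \<alpha> = m" by auto
    have "w \<in> gam P ` del P \<alpha>" using glob(1)[OF al(1)] al(2) m(1) by auto
    then obtain e' where e': "e' \<in> del P \<alpha>" "gam P e' = w" by auto
    have e'1: "e' \<in> Sk P 1" using del_Sk2[OF al(1)] e'(1) by auto
    have "(e', m) \<in> upper_rel P 1" unfolding upper_rel_def
      using e'1 m(1) al e'(1) by (auto simp: numeral_2_eq_2)
    then have "(e', m) \<in> upper_lt P 1" unfolding upper_lt_def by auto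
    then show False using m e'1 e'(2) by auto
  qed
  then have "m \<in> SS" using m(1) unfolding SS_def by auto
  then show ?thesis using m(1) by blast
qed

lemma SS_consec: assumes "a \<in> SS" "(src a, w) \<in> upper_lt P 0" "(w, gam P a) \<in> upper_lt P 0"
  shows False
proof -
  let ?X = "{u. \<exists>a \<in> SS. src a = u \<and> (\<exists>w. (u, w) \<in> upper_lt P 0 \<and> (w, gam P a) \<in> upper_lt P 0)}"
  obtain u where u: "u \<in> ?X" "\<forall>y \<in> ?X. (y,u) \<notin> upper_lt P 0"
    using upper_min[of "src a" ?X 0] assms by blast
  then obtain b w0 where b: "b \<in> SS" "src b = u" "(u, w0) \<in> upper_lt P 0" "(w0, gam P b) \<in> upper_lt P 0"
    by blast
  let ?W = "{w. (u, w) \<in> upper_lt P 0 \<and> (w, gam P b) \<in> upper_lt P 0}"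
  obtain w where w: "w \<in> ?W" "\<forall>y \<in> ?W. (y,w) \<notin> upper_lt P 0"
    using upper_min[of w0 ?W 0] b by blast
  have w0: "w \<in> Sk P 0" "u \<in> Sk P 0" using w(1) upper_sub by auto
  obtain b' where b': "b' \<in> SS" "gam P b' = w" using SS_into[OF w0(1)] w(1) by blast
  have b'1: "b' \<in> Sk P 1" "b \<in> Sk P 1" using b' b unfolding SS_def by auto
  have lt': "(src b', w) \<in> upper_lt P 0" using edge_lt[OF b'1(1)] b' by simp
  have s0: "src b' \<in> Sk P 0" using src_Sk b'1 by auto
  show False
  proof (cases "src b' = u")
    case True
    then have "b' = b" using SS_src_inj b b' by auto
    then show ?thesis using w(1) b' upper_irr by auto
  next
    case False
    then consider "(u, src b') \<in> upper_lt P 0" | "(src b', u) \<in> upper_lt P 0"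
      using lin0[OF w0(2) s0] by blast
    then show ?thesis
    proof cases
      case 1
      then have "src b' \<in> ?W" using lt' w(1) upper_trans by blast
      then show ?thesis using w(2) lt' by blast
    next
      case 2
      then have "src b' \<in> ?X" using b' w(1) by auto
      then show ?thesis using u(2) 2 by blast
    qed
  qed
qed

lemma lemK: "(c, d) \<in> upper_lt P 1 \<Longrightarrow> \<exists>\<theta>0 \<theta>. \<theta>0 \<in> Sk P 2 \<and> \<theta> \<in> Sk P 2 \<and> c \<in> del P \<theta>0
   \<and> gam P \<theta> = d \<and> (\<theta>0, \<theta>) \<in> (lower_rel P 2)\<^sup>*"
  unfolding upper_lt_def
proof (induction rule: trancl_induct)
  case (base y)
  then show ?case unfolding upper_rel_def by (auto simp: numeral_2_eq_2)
next
  case (step y z)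
  then obtain \<theta>0 \<theta> where t: "\<theta>0 \<in> Sk P 2" "\<theta> \<in> Sk P 2" "c \<in> del P \<theta>0" "gam P \<theta> = y"
    "(\<theta>0, \<theta>) \<in> (lower_rel P 2)\<^sup>*" by blast
  from step(2) obtain \<alpha> where al: "\<alpha> \<in> Sk P 2" "y \<in> del P \<alpha>" "gam P \<alpha> = z"
    unfolding upper_rel_def by (auto simp: numeral_2_eq_2)
  have "(\<theta>, \<alpha>) \<in> lower_rel P 2" unfolding lower_rel_def using t al by auto
  then have "(\<theta>0, \<alpha>) \<in> (lower_rel P 2)\<^sup>*" using t(5) by auto
  then show ?case using t al by blast
qed

lemma lemG: "(\<theta>, \<theta>') \<in> (lower_rel P 2)\<^sup>* \<Longrightarrow> (gam P \<theta>, gam P \<theta>') \<in> (upper_rel P 1)\<^sup>*"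
proof (induction rule: rtrancl_induct)
  case base
  then show ?case by simp
next
  case (step y z)
  have "(gam P y, gam P z) \<in> upper_rel P 1"
    using step(2) gam_Sk2 unfolding lower_rel_def upper_rel_def by (auto simp: numeral_2_eq_2)
  then show ?case using step(3) by auto
qed

lemma lemN: assumes "\<alpha> \<in> Sk P 2" "e1 \<in> del P \<alpha>" "e2 \<in> del P \<alpha>"
  shows "(e1, e2) \<notin> upper_lt P 1"
proof
  assume "(e1, e2) \<in> upper_lt P 1"
  then obtain \<theta>0 \<theta> where t: "\<theta>0 \<in> Sk P 2" "\<theta> \<in> Sk P 2" "e1 \<in> del P \<theta>0"
   "gam P \<theta> = e2" "(\<theta>0, \<theta>) \<in> (lower_rel P 2)\<^sup>*" using lemK by blast
  have "(\<theta>, \<alpha>) \<in> lower_rel P 2" unfolding lower_rel_def using t assms by auto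
  then have low: "(\<theta>0, \<alpha>) \<in> lower_lt P 2" unfolding lower_lt_def using t(5) by auto
  have e12: "e1 \<in> Sk P 1" "e2 \<in> Sk P 1" using del_Sk2 assms by auto
  show False
  proof (cases "\<theta>0 = \<alpha>")
    case True
    have "(gam P \<alpha>, e2) \<in> (upper_rel P 1)\<^sup>*" using lemG[OF t(5)] True t(4) by simp
    moreover have "(e2, gam P \<alpha>) \<in> upper_rel P 1" unfolding upper_rel_def
      using e12 gam_Sk2 assms by (auto simp: numeral_2_eq_2)
    ultimately have "(e2, e2) \<in> upper_lt P 1" unfolding upper_lt_def by auto
    then show False using upper_irr by blast
  next
    case False
    have "comparable (upper_lt P (Suc 1)) \<theta>0 \<alpha>"
      using lin_del[of e1 1 \<theta>0 \<alpha>] e12 t assms False by (simp add: numeral_2_eq_2)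
    then have "comparable (upper_lt P 2) \<theta>0 \<alpha>" by (simp add: numeral_2_eq_2)
    moreover have "comparable (lower_lt P 2) \<theta>0 \<alpha>" using low unfolding comparable_def by blast
    ultimately show False using disj[of 2 \<theta>0 \<alpha>] t assms by simp
  qed
qed

lemma src_inj2: assumes "\<alpha> \<in> Sk P 2" shows "inj_on src (del P \<alpha>)"
proof (rule inj_onI)
  fix e1 e2 assume e: "e1 \<in> del P \<alpha>" "e2 \<in> del P \<alpha>" "src e1 = src e2"
  show "e1 = e2"
  proof (rule ccontr)
    assume ne: "e1 \<noteq> e2"
    have e12: "e1 \<in> Sk P 1" "e2 \<in> Sk P 1" using del_Sk2 assms e by auto
    have s1: "src e1 \<in> Sk P 0" "src e1 \<in> del P e1" "src e1 \<in> del P e2"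
      using del1[OF e12(1)] del1[OF e12(2)] e(3) src_Sk[OF e12(1)] by auto
    have e12': "e1 \<in> Sk P (Suc 0)" "e2 \<in> Sk P (Suc 0)" using e12 by auto
    have "comparable (upper_lt P (Suc 0)) e1 e2"
      by (rule lin_del[OF s1(1) e12' s1(2) s1(3) ne])
    then show False using lemN[OF assms e(1) e(2)] lemN[OF assms e(2) e(1)] unfolding comparable_def by auto
  qed
qed

lemma gam_inj2: assumes "\<alpha> \<in> Sk P 2" shows "inj_on (gam P) (del P \<alpha>)"
proof (rule inj_onI)
  fix e1 e2 assume e: "e1 \<in> del P \<alpha>" "e2 \<in> del P \<alpha>" "gam P e1 = gam P e2"
  show "e1 = e2"
  proof (rule ccontr)
    assume ne: "e1 \<noteq> e2"
    have e12: "e1 \<in> Sk P 1" "e2 \<in> Sk P 1" using del_Sk2 assms e by auto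
    have e12': "e1 \<in> Sk P (Suc 0)" "e2 \<in> Sk P (Suc 0)" using e12 by auto
    have "comparable (upper_lt P (Suc 0)) e1 e2"
      by (rule lin_gam[OF gam_Sk1[OF e12(1)] e12' refl e(3)[symmetric] ne])
    then show False using lemN[OF assms e(1) e(2)] lemN[OF assms e(2) e(1)] unfolding comparable_def by auto
  qed
qed


lemma Del_src: assumes "D \<subseteq> Sk P 1" shows "Del P D = src ` D"
  using assms del1 unfolding Del_def by auto

lemma cross_count:
  assumes al: "\<alpha> \<in> Sk P 2"
    and dc: "\<And>x y. (x,y) \<in> upper_lt P 0 \<Longrightarrow> y \<in> Dn \<Longrightarrow> x \<in> Dn"
  shows "(src (gam P \<alpha>) \<in> Dn \<and> gam P (gam P \<alpha>) \<notin> Dn \<longrightarrow>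
           card {e \<in> del P \<alpha>. src e \<in> Dn \<and> gam P e \<notin> Dn} = 1) \<and>
         (\<not> (src (gam P \<alpha>) \<in> Dn \<and> gam P (gam P \<alpha>) \<notin> Dn) \<longrightarrow>
           {e \<in> del P \<alpha>. src e \<in> Dn \<and> gam P e \<notin> Dn} = {})"
proof -
  define D where "D = del P \<alpha>"
  define b where "b = gam P \<alpha>"
  have b1: "b \<in> Sk P 1" using gam_Sk2[OF al] b_def by simp
  have D1: "D \<subseteq> Sk P 1" using del_Sk2[OF al] D_def by simp
  have finD: "finite D" using D1 fin_Sk finite_subset by blast
  have g1: "{gam P b} = gam P ` D - src ` D" using glob(1)[OF al] Del_src[OF D1] D_def b_def by simp
  have g2: "{src b} = src ` D - gam P ` D" using glob(2)[OF al] Del_src[OF D1] D_def b_def del1[OF b1] by simp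
  define A where "A = {e \<in> D. src e \<in> Dn}"
  define B where "B = {e \<in> D. gam P e \<in> Dn}"
  have BA: "B \<subseteq> A"
  proof
    fix e assume "e \<in> B"
    then have "e \<in> D" "gam P e \<in> Dn" unfolding B_def by auto
    moreover have "(src e, gam P e) \<in> upper_lt P 0" using edge_lt D1 \<open>e \<in> D\<close> by blast
    ultimately show "e \<in> A" unfolding A_def using dc by blast
  qed
  have CrAB: "{e \<in> D. src e \<in> Dn \<and> gam P e \<notin> Dn} = A - B" unfolding A_def B_def by auto
  have finB: "finite B" unfolding B_def using finD by simp
  have finA: "finite A" unfolding A_def using finD by simp
  have cC: "card (A - B) = card A - card B" using card_Diff_subset[OF finB BA] .
  have injs: "inj_on src D" using src_inj2[OF al] D_def by simp
  have injg: "inj_on (gam P) D" using gam_inj2[OF al] D_def by simp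
  have cA: "card A = card (src ` D \<inter> Dn)"
  proof -
    have "src ` A = src ` D \<inter> Dn" unfolding A_def by auto
    moreover have "inj_on src A" using injs unfolding A_def by (rule inj_on_subset) auto
    ultimately show ?thesis by (metis card_image)
  qed
  have cB: "card B = card (gam P ` D \<inter> Dn)"
  proof -
    have "gam P ` B = gam P ` D \<inter> Dn" unfolding B_def by auto
    moreover have "inj_on (gam P) B" using injg unfolding B_def by (rule inj_on_subset) auto
    ultimately show ?thesis by (metis card_image)
  qed
  define Z where "Z = src ` D \<inter> gam P ` D"
  have finZ: "finite (Z \<inter> Dn)" unfolding Z_def using finD by simp
  have sD: "src ` D \<inter> Dn = (Z \<inter> Dn) \<union> ({src b} \<inter> Dn)" using g2 unfolding Z_def by blast
  have gD: "gam P ` D \<inter> Dn = (Z \<inter> Dn) \<union> ({gam P b} \<inter> Dn)" using g1 unfolding Z_def by blast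
  have sZ: "src b \<notin> Z" using g2 unfolding Z_def by blast
  have gZ: "gam P b \<notin> Z" using g1 unfolding Z_def by blast
  have cs: "card (src ` D \<inter> Dn) = card (Z \<inter> Dn) + card ({src b} \<inter> Dn)"
    unfolding sD by (rule card_Un_disjoint) (use finZ sZ in auto)
  have cg: "card (gam P ` D \<inter> Dn) = card (Z \<inter> Dn) + card ({gam P b} \<inter> Dn)"
    unfolding gD by (rule card_Un_disjoint) (use finZ gZ in auto)
  have main: "card (A - B) = card ({src b} \<inter> Dn) - card ({gam P b} \<inter> Dn)"
    using cC cA cB cs cg by simp
  have bl: "(src b, gam P b) \<in> upper_lt P 0" using edge_lt[OF b1] .
  have finAB: "finite (A - B)" using finA by simp
  show ?thesis
  proof (intro conjI impI)
    assume "src (gam P \<alpha>) \<in> Dn \<and> gam P (gam P \<alpha>) \<notin> Dn"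
    then have "card ({src b} \<inter> Dn) = 1" "card ({gam P b} \<inter> Dn) = 0" using b_def by auto
    then show "card {e \<in> del P \<alpha>. src e \<in> Dn \<and> gam P e \<notin> Dn} = 1"
      using main CrAB D_def by simp
  next
    assume a: "\<not> (src (gam P \<alpha>) \<in> Dn \<and> gam P (gam P \<alpha>) \<notin> Dn)"
    have "card (A - B) = 0"
    proof (cases "gam P b \<in> Dn")
      case True
      then have "src b \<in> Dn" using dc bl by blast
      then show ?thesis using main True by simp
    next
      case False
      then have "src b \<notin> Dn" using a b_def by auto
      then show ?thesis using main by simp
    qed
    then have "A - B = {}" using finAB by simp
    then show "{e \<in> del P \<alpha>. src e \<in> Dn \<and> gam P e \<notin> Dn} = {}" using CrAB D_def by simp
  qed
qed


lemma I_faces[simp]: "faces I_op = {IMinus, IPlus, IA}" by (simp add: I_op_def)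
lemma I_dim[simp]: "dim I_op x = (if x = IA then 1 else 0)" by (simp add: I_op_def)
lemma I_gam[simp]: "gam I_op x = (if x = IA then IPlus else x)" by (simp add: I_op_def)
lemma I_del[simp]: "del I_op x = (if x = IA then {IMinus} else {})" by (simp add: I_op_def)

lemma gamk_Suc: "q \<in> Sk P (Suc k) \<Longrightarrow> gamk P k q = gam P q"
  unfolding gamk_def using Sk_dim by simp

lemma gamkI: "gamk I_op k y = (if y = IA \<and> k = 0 then IPlus else y)"
  unfolding gamk_def by (cases y) auto

context
  fixes h
  assumes io: "iota_map P I_op h"
begin

lemma io_faces: "q \<in> faces P \<Longrightarrow> h q \<in> {IMinus, IPlus, IA}"
  using io unfolding iota_map_def by auto

lemma io_dim: "q \<in> faces P \<Longrightarrow> dim I_op (h q) \<le> dim P q"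
  using io unfolding iota_map_def by blast

lemma io_gam: "q \<in> Sk P (Suc k) \<Longrightarrow> h (gam P q) = gamk I_op k (h q)"
  using io gamk_Suc[of q k] unfolding iota_map_def by metis

lemma io_del: "q \<in> Sk P (Suc k) \<Longrightarrow>
        (dim I_op (h q) = Suc k \<longrightarrow> bij_betw h (del P q - ker P I_op h) (del I_op (h q))) \<and>
        (dim I_op (h q) = k \<longrightarrow> bij_betw h (del P q - ker P I_op h) {h q}) \<and>
        (dim I_op (h q) < k \<longrightarrow> del P q \<subseteq> ker P I_op h)"
  using io unfolding iota_map_def by blast

lemma H_vert: "x \<in> Sk P 0 \<Longrightarrow> h x \<noteq> IA"
  using io_dim[of x] Sk_faces Sk_dim by fastforce

lemma H_vert2: "x \<in> Sk P 0 \<Longrightarrow> h x = IMinus \<or> h x = IPlus"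
  using io_faces[of x] H_vert[of x] Sk_faces by auto

lemma H_edge: assumes e: "e \<in> Sk P 1"
  shows "(h e = IA \<longrightarrow> h (src e) = IMinus \<and> h (gam P e) = IPlus) \<and>
         (h e \<noteq> IA \<longrightarrow> h (src e) = h e \<and> h (gam P e) = h e)"
proof -
  have e': "e \<in> Sk P (Suc 0)" using e by simp
  have g: "h (gam P e) = gamk I_op 0 (h e)" using io_gam[OF e'] .
  have sk: "src e \<notin> ker P I_op h" unfolding ker_def using src_Sk[OF e] Sk_dim by auto
  have dk: "del P e - ker P I_op h = {src e}" using del1[OF e] sk by auto
  have d: "(dim I_op (h e) = Suc 0 \<longrightarrow> bij_betw h {src e} (del I_op (h e))) \<and>
        (dim I_op (h e) = 0 \<longrightarrow> bij_betw h {src e} {h e})" using io_del[OF e'] dk by simp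
  show ?thesis
  proof (cases "h e = IA")
    case True
    then show ?thesis using g d gamkI by (simp add: bij_betw_def)
  next
    case False
    then show ?thesis using g d gamkI by (simp add: bij_betw_def)
  qed
qed

lemma H_up: assumes q: "q \<in> Sk P (Suc (Suc k))" shows "h (gam P q) = h q"
  using io_gam[OF q] gamkI by simp

lemma H_mono: assumes "(x,y) \<in> upper_lt P 0" "h x = IPlus" shows "h y = IPlus"
  using assms(1) unfolding upper_lt_def
proof (induction rule: trancl_induct)
  case (base y)
  then obtain e where e: "e \<in> Sk P 1" "x \<in> del P e" "gam P e = y" unfolding upper_rel_def by auto
  then have "src e = x" using del1 by auto
  then show ?case using H_edge[OF e(1)] e assms(2) by auto
next
  case (step y z)
  then obtain e where e: "e \<in> Sk P 1" "y \<in> del P e" "gam P e = z" unfolding upper_rel_def by auto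
  then have "src e = y" using del1 by auto
  then show ?case using H_edge[OF e(1)] e step by auto
qed

lemma H_point: "q \<in> faces P \<Longrightarrow> h q \<noteq> IA \<Longrightarrow> \<exists>x \<in> Sk P 0. h x = h q"
proof (induction "dim P q" arbitrary: q rule: nat_less_induct)
  case 1
  show ?case
  proof (cases "dim P q")
    case 0
    then show ?thesis using 1 Sk_I by blast
  next
    case (Suc n)
    show ?thesis
    proof (cases n)
      case 0
      then have "q \<in> Sk P 1" using Suc 1 Sk_I by simp
      then show ?thesis using H_edge[of q] src_Sk 1 by metis
    next
      case (Suc m)
      then have q: "q \<in> Sk P (Suc (Suc m))" using \<open>dim P q = Suc n\<close> 1 Sk_I by simp
      have g: "gam P q \<in> Sk P (Suc m)" using gam_Sk[OF q] .
      have "h (gam P q) = h q" using H_up[OF q] .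
      moreover have "dim P (gam P q) < dim P q" using g q Sk_dim by simp
      ultimately show ?thesis using 1 g Sk_faces by metis
    qed
  qed
qed

end

lemma H_det: assumes io1: "iota_map P I_op h" and io2: "iota_map P I_op h'"
  and v: "\<forall>x \<in> Sk P 0. h x = h' x"
  shows "q \<in> faces P \<Longrightarrow> h q = h' q"
proof (induction "dim P q" arbitrary: q rule: nat_less_induct)
  case 1
  show ?case
  proof (cases "dim P q")
    case 0
    then show ?thesis using 1 Sk_I v by blast
  next
    case (Suc n)
    show ?thesis
    proof (cases n)
      case 0
      then have e: "q \<in> Sk P 1" using Suc 1 Sk_I by simp
      have s: "h (src q) = h' (src q)" "h (gam P q) = h' (gam P q)"
        using v src_Sk[OF e] gam_Sk1[OF e] by auto
      show ?thesis using H_edge[OF io1 e] H_edge[OF io2 e] s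
        by (cases "h q = IA"; cases "h' q = IA") auto
    next
      case (Suc m)
      then have q: "q \<in> Sk P (Suc (Suc m))" using \<open>dim P q = Suc n\<close> 1 Sk_I by simp
      have g: "gam P q \<in> Sk P (Suc m)" using gam_Sk[OF q] .
      have "dim P (gam P q) < dim P q" using g q Sk_dim by simp
      then have "h (gam P q) = h' (gam P q)" using 1 g Sk_faces by blast
      then show ?thesis using H_up[OF io1 q] H_up[OF io2 q] by simp
    qed
  qed
qed


lemma vert_char: assumes io: "iota_map P I_op h" and a: "a \<in> SS" "h a = IA" and x: "x \<in> Sk P 0"
  shows "h x = IMinus \<longleftrightarrow> x = src a \<or> (x, src a) \<in> upper_lt P 0"
proof -
  have a1: "a \<in> Sk P 1" using a unfolding SS_def by auto
  have ha: "h (src a) = IMinus" "h (gam P a) = IPlus" using H_edge[OF io a1] a by auto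
  have sa: "src a \<in> Sk P 0" "gam P a \<in> Sk P 0" using src_Sk[OF a1] gam_Sk1[OF a1] by auto
  show ?thesis
  proof
    assume hx: "h x = IMinus"
    show "x = src a \<or> (x, src a) \<in> upper_lt P 0"
    proof (rule ccontr)
      assume n: "\<not> (x = src a \<or> (x, src a) \<in> upper_lt P 0)"
      then have l1: "(src a, x) \<in> upper_lt P 0" using lin0[OF x sa(1)] by blast
      have "x \<noteq> gam P a" using hx ha by auto
      then consider "(x, gam P a) \<in> upper_lt P 0" | "(gam P a, x) \<in> upper_lt P 0"
        using lin0[OF x sa(2)] by blast
      then show False
      proof cases
        case 1
        then show ?thesis using SS_consec[OF a(1) l1] by blast
      next
        case 2
        then show ?thesis using H_mono[OF io 2 ha(2)] hx by simp
      qed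
    qed
  next
    assume "x = src a \<or> (x, src a) \<in> upper_lt P 0"
    then show "h x = IMinus"
    proof
      assume "x = src a" then show ?thesis using ha by simp
    next
      assume l: "(x, src a) \<in> upper_lt P 0"
      show ?thesis
      proof (rule ccontr)
        assume "h x \<noteq> IMinus"
        then have "h x = IPlus" using H_vert2[OF io x] by simp
        then show False using H_mono[OF io l] ha by simp
      qed
    qed
  qed
qed

lemma exists_a: assumes io: "iota_map P I_op h" and su: "h ` faces P = faces I_op"
  shows "\<exists>a. a \<in> SS \<and> h a = IA"
proof -
  obtain q where q: "q \<in> faces P" "h q = IMinus" using su by (metis I_faces imageE insertI1)
  obtain m where m: "m \<in> Sk P 0" "h m = IMinus" using H_point[OF io q(1)] q by auto
  obtain q' where q': "q' \<in> faces P" "h q' = IPlus" using su by (metis I_faces imageE insertI1 insertI2)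
  obtain p where p: "p \<in> Sk P 0" "h p = IPlus" using H_point[OF io q'(1)] q' by auto
  let ?M = "{x \<in> Sk P 0. h x = IMinus}"
  obtain s where s: "s \<in> ?M" "\<forall>y \<in> ?M. (s,y) \<notin> upper_lt P 0"
    using upper_max[of m ?M 0] m by blast
  have "s \<noteq> p" using s p by auto
  then have sp: "(s, p) \<in> upper_lt P 0"
    using lin0[of s p] s p H_mono[OF io, of p s] by auto
  obtain a where a: "a \<in> SS" "src a = s" using SS_from[of s p] s sp by auto
  have a1: "a \<in> Sk P 1" using a unfolding SS_def by auto
  have "(s, gam P a) \<in> upper_lt P 0" using edge_lt[OF a1] a by simp
  then have "h (gam P a) \<noteq> IMinus" using s gam_Sk1[OF a1] by auto
  then have "h (gam P a) = IPlus" using H_vert2[OF io gam_Sk1[OF a1]] by simp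
  then have "h a = IA" using H_edge[OF io a1] a s by auto
  then show ?thesis using a by blast
qed

lemma uniq_a: assumes io: "iota_map P I_op h" and a: "a \<in> SS" "h a = IA" and b: "b \<in> SS" "h b = IA"
  shows "a = b"
proof -
  have a1: "a \<in> Sk P 1" "b \<in> Sk P 1" using a b unfolding SS_def by auto
  have ha: "h (src a) = IMinus" "h (src b) = IMinus" using H_edge[OF io a1(1)] H_edge[OF io a1(2)] a b by auto
  have 1: "src a = src b \<or> (src a, src b) \<in> upper_lt P 0"
    using vert_char[OF io b src_Sk[OF a1(1)]] ha by simp
  have 2: "src b = src a \<or> (src b, src a) \<in> upper_lt P 0"
    using vert_char[OF io a src_Sk[OF a1(2)]] ha by simp
  have "src a = src b" using 1 2 upper_trans upper_irr by metis
  then show ?thesis using SS_src_inj a b by blast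
qed


definition ev :: "'a set \<Rightarrow> 'a \<Rightarrow> I_face" where
  "ev Dn e = (if src e \<in> Dn \<and> gam P e \<notin> Dn then IA else if src e \<in> Dn then IMinus else IPlus)"

definition hD :: "'a set \<Rightarrow> 'a \<Rightarrow> I_face" where
  "hD Dn q = (if q \<in> faces P then (if dim P q = 0 then (if q \<in> Dn then IMinus else IPlus)
     else ev Dn (gamk P 1 q)) else undefined)"

lemma funpow_Sk: "q \<in> Sk P (Suc n) \<Longrightarrow> (gam P ^^ n) q \<in> Sk P 1"
proof (induction n arbitrary: q)
  case 0
  then show ?case by simp
next
  case (Suc n)
  have "gam P q \<in> Sk P (Suc n)" using gam_Sk[OF Suc.prems] .
  then have "(gam P ^^ n) (gam P q) \<in> Sk P 1" using Suc.IH by blast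
  then show ?case by (simp add: funpow_Suc_right del: funpow.simps)
qed

lemma gamk1_Sk: "q \<in> Sk P (Suc n) \<Longrightarrow> gamk P 1 q \<in> Sk P 1"
  unfolding gamk_def using Sk_dim funpow_Sk by simp

lemma gamk1_edge: "e \<in> Sk P 1 \<Longrightarrow> gamk P 1 e = e"
  unfolding gamk_def using Sk_dim by simp

lemma gamk1_gam: assumes "q \<in> Sk P (Suc (Suc n))" shows "gamk P 1 (gam P q) = gamk P 1 q"
proof -
  have "gam P q \<in> Sk P (Suc n)" using gam_Sk[OF assms] .
  then have "gamk P 1 (gam P q) = (gam P ^^ n) (gam P q)" unfolding gamk_def using Sk_dim by simp
  also have "\<dots> = (gam P ^^ (Suc n)) q" by (simp add: funpow_Suc_right del: funpow.simps)
  also have "\<dots> = gamk P 1 q" unfolding gamk_def using Sk_dim assms by simp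
  finally show ?thesis .
qed

lemma gamk1_2: "q \<in> Sk P 2 \<Longrightarrow> gamk P 1 q = gam P q"
  unfolding gamk_def using Sk_dim by (simp add: numeral_2_eq_2)

lemma hD_v: "x \<in> Sk P 0 \<Longrightarrow> hD Dn x = (if x \<in> Dn then IMinus else IPlus)"
  unfolding hD_def using Sk_faces Sk_dim by auto

lemma hD_e: "q \<in> Sk P (Suc n) \<Longrightarrow> hD Dn q = ev Dn (gamk P 1 q)"
  unfolding hD_def using Sk_faces Sk_dim by auto

lemma hD_edge: "e \<in> Sk P 1 \<Longrightarrow> hD Dn e = ev Dn e"
  using hD_e[of e 0 Dn] gamk1_edge by simp

lemma hD_range: "hD Dn q \<in> {IMinus, IPlus, IA} \<or> q \<notin> faces P"
  unfolding hD_def ev_def by auto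

lemma dimI_le: "dim I_op y \<le> 1" by simp

context
  fixes Dn
  assumes dc: "\<And>x y. (x,y) \<in> upper_lt P 0 \<Longrightarrow> y \<in> Dn \<Longrightarrow> x \<in> Dn"
begin

lemma noncross: "e \<in> Sk P 1 \<Longrightarrow> \<not> (src e \<in> Dn \<and> gam P e \<notin> Dn) \<Longrightarrow> (src e \<in> Dn \<longleftrightarrow> gam P e \<in> Dn)"
  using dc edge_lt by blast

lemma ker_e: assumes "e \<in> Sk P 1" shows "e \<in> ker P I_op (hD Dn) \<longleftrightarrow> \<not> (src e \<in> Dn \<and> gam P e \<notin> Dn)"
  using assms hD_edge[OF assms] Sk_faces Sk_dim unfolding ker_def ev_def by auto

lemma hD_iota: "iota_map P I_op (hD Dn)"
  unfolding iota_map_def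
proof (intro conjI; intro ballI allI)
  fix q assume q: "q \<in> faces P"
  show "hD Dn q \<in> faces I_op" using hD_range[of Dn q] q by simp
next
  fix q assume q: "q \<in> faces P"
  show "dim I_op (hD Dn q) \<le> dim P q"
  proof (cases "dim P q = 0")
    case True then show ?thesis using q unfolding hD_def by simp
  next
    case False then show ?thesis using dimI_le[of "hD Dn q"] by linarith
  qed
next
  fix k q assume q: "q \<in> Sk P (Suc k)"
  show "hD Dn (gamk P k q) = gamk I_op k (hD Dn q)"
  proof (cases k)
    case 0
    then have e: "q \<in> Sk P 1" using q by simp
    have g: "gam P q \<in> Sk P 0" using gam_Sk1[OF e] .
    show ?thesis
      using gamk_Suc[OF q] 0 hD_edge[OF e] hD_v[OF g] noncross[OF e] gamkI
      unfolding ev_def by auto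
  next
    case (Suc j)
    then have q2: "q \<in> Sk P (Suc (Suc j))" using q by simp
    have g: "gam P q \<in> Sk P (Suc j)" using gam_Sk[OF q2] .
    show ?thesis using gamk_Suc[OF q] Suc hD_e[OF g] hD_e[OF q2] gamk1_gam[OF q2] gamkI by simp
  qed
next
  fix k q assume q: "q \<in> Sk P (Suc k)"
  show "(dim I_op (hD Dn q) = Suc k \<longrightarrow>
          bij_betw (hD Dn) (del P q - ker P I_op (hD Dn)) (del I_op (hD Dn q))) \<and>
        (dim I_op (hD Dn q) = k \<longrightarrow> bij_betw (hD Dn) (del P q - ker P I_op (hD Dn)) {hD Dn q}) \<and>
        (dim I_op (hD Dn q) < k \<longrightarrow> del P q \<subseteq> ker P I_op (hD Dn))"
  proof (cases k)
    case 0
    then have e: "q \<in> Sk P 1" using q by simp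
    have sk: "src q \<notin> ker P I_op (hD Dn)" unfolding ker_def using src_Sk[OF e] Sk_dim by auto
    have dk: "del P q - ker P I_op (hD Dn) = {src q}" using del1[OF e] sk by auto
    have hs: "hD Dn (src q) = (if src q \<in> Dn then IMinus else IPlus)" using hD_v[OF src_Sk[OF e]] .
    show ?thesis using 0 dk hs hD_edge[OF e] unfolding ev_def by (auto simp: bij_betw_def)
  next
    case (Suc j)
    show ?thesis
    proof (cases j)
      case 0
      then have q2: "q \<in> Sk P 2" using q Suc by (simp add: numeral_2_eq_2)
      have hq: "hD Dn q = ev Dn (gam P q)" using hD_e[OF q] gamk1_2[OF q2] by simp
      have D1: "del P q \<subseteq> Sk P 1" using del_Sk2[OF q2] .
      have DK: "del P q - ker P I_op (hD Dn) = {e \<in> del P q. src e \<in> Dn \<and> gam P e \<notin> Dn}"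
        using D1 ker_e by blast
      have cc: "(src (gam P q) \<in> Dn \<and> gam P (gam P q) \<notin> Dn \<longrightarrow>
           card {e \<in> del P q. src e \<in> Dn \<and> gam P e \<notin> Dn} = 1) \<and>
         (\<not> (src (gam P q) \<in> Dn \<and> gam P (gam P q) \<notin> Dn) \<longrightarrow>
           {e \<in> del P q. src e \<in> Dn \<and> gam P e \<notin> Dn} = {})"
        by (rule cross_count[OF q2 dc])
      show ?thesis
      proof (cases "src (gam P q) \<in> Dn \<and> gam P (gam P q) \<notin> Dn")
        case True
        then have hIA: "hD Dn q = IA" using hq unfolding ev_def by simp
        obtain e where e: "{e \<in> del P q. src e \<in> Dn \<and> gam P e \<notin> Dn} = {e}"
          using cc True by (metis card_1_singletonE)
        then have "e \<in> del P q" "src e \<in> Dn" "gam P e \<notin> Dn" by auto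
        then have "hD Dn e = IA" using hD_edge D1 unfolding ev_def by auto
        then show ?thesis using hIA DK e Suc 0 by (auto simp: bij_betw_def)
      next
        case False
        then have "hD Dn q \<noteq> IA" using hq unfolding ev_def by auto
        moreover have "del P q \<subseteq> ker P I_op (hD Dn)" using cc False DK by auto
        ultimately show ?thesis using Suc 0 by simp
      qed
    next
      case (Suc i)
      have q3: "q \<in> Sk P (Suc (Suc (Suc i)))" using q \<open>k = Suc j\<close> Suc by simp
      have "del P q \<subseteq> Sk P (Suc (Suc i))" using del_Sk[OF q3] .
      then have "del P q \<subseteq> ker P I_op (hD Dn)"
        unfolding ker_def using Sk_faces Sk_dim dimI_le by fastforce
      moreover have "dim I_op (hD Dn q) < k" using dimI_le[of "hD Dn q"] \<open>k = Suc j\<close> Suc by linarith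
      ultimately show ?thesis by simp
    qed
  qed
qed

end

lemma hD_ext: "hD Dn \<in> extensional (faces P)"
  unfolding hD_def extensional_def by auto

lemma construct: assumes a: "a \<in> SS"
  defines "Dn \<equiv> {x. x = src a \<or> (x, src a) \<in> upper_lt P 0}"
  shows "iota_map P I_op (hD Dn) \<and> hD Dn \<in> extensional (faces P) \<and>
         hD Dn ` faces P = faces I_op \<and> hD Dn a = IA"
proof -
  have dc: "\<And>x y. (x,y) \<in> upper_lt P 0 \<Longrightarrow> y \<in> Dn \<Longrightarrow> x \<in> Dn"
    unfolding Dn_def using upper_trans by blast
  have a1: "a \<in> Sk P 1" using a unfolding SS_def by auto
  have el: "(src a, gam P a) \<in> upper_lt P 0" using edge_lt[OF a1] .
  have "gam P a \<notin> Dn"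
  proof
    assume "gam P a \<in> Dn"
    then have "gam P a = src a \<or> (gam P a, src a) \<in> upper_lt P 0" unfolding Dn_def by simp
    then show False using el upper_trans upper_irr by metis
  qed
  moreover have "src a \<in> Dn" unfolding Dn_def by simp
  ultimately have hA: "hD Dn a = IA" using hD_edge[OF a1] unfolding ev_def by simp
  have hM: "hD Dn (src a) = IMinus" using hD_v[OF src_Sk[OF a1]] \<open>src a \<in> Dn\<close> by simp
  have hP: "hD Dn (gam P a) = IPlus" using hD_v[OF gam_Sk1[OF a1]] \<open>gam P a \<notin> Dn\<close> by simp
  have io: "iota_map P I_op (hD Dn)" using hD_iota dc by blast
  have "hD Dn ` faces P \<subseteq> faces I_op" using hD_range by auto
  moreover have "IMinus \<in> hD Dn ` faces P"
    using imageI[OF Sk_faces[OF src_Sk[OF a1]], of "hD Dn"] hM by simp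
  moreover have "IPlus \<in> hD Dn ` faces P"
    using imageI[OF Sk_faces[OF gam_Sk1[OF a1]], of "hD Dn"] hP by simp
  moreover have "IA \<in> hD Dn ` faces P"
    using imageI[OF Sk_faces[OF a1], of "hD Dn"] hA by simp
  ultimately have "hD Dn ` faces P = faces I_op" by auto
  then show ?thesis using io hD_ext hA by blast
qed

end

theorem mainTheorem6:
  fixes P :: "'a phg"
  assumes "pos_opetope P"
  shows "\<exists>f. bij_betw f
           {h. h \<in> extensional (faces P) \<and> iota_map P I_op h \<and> h ` faces P = faces I_op}
           (Sk P 1 - gam P ` Sk P 2)"
proof -
  have Cd: "pos_opetopic_cardinal P" using assms unfolding pos_opetope_def by blast
  interpret poc P by (rule poc.intro[OF Cd])
  define A where "A = {h. h \<in> extensional (faces P) \<and> iota_map P I_op h \<and> h ` faces P = faces I_op}"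
  define f where "f h = (THE a. a \<in> SS \<and> h a = IA)" for h :: "'a \<Rightarrow> I_face"
  have fh: "f h \<in> SS \<and> h (f h) = IA" if "h \<in> A" for h
  proof -
    have io: "iota_map P I_op h" and su: "h ` faces P = faces I_op" using that unfolding A_def by auto
    obtain a where a: "a \<in> SS" "h a = IA" using exists_a[OF io su] by blast
    have "\<exists>!a. a \<in> SS \<and> h a = IA" using a uniq_a[OF io] by blast
    then show ?thesis unfolding f_def by (rule theI')
  qed
  have inj: "inj_on f A"
  proof (rule inj_onI)
    fix h h' assume h: "h \<in> A" "h' \<in> A" "f h = f h'"
    have io: "iota_map P I_op h" "iota_map P I_op h'" and ex: "h \<in> extensional (faces P)" "h' \<in> extensional (faces P)"
      using h unfolding A_def by auto
    have a: "f h \<in> SS" "h (f h) = IA" "h' (f h) = IA" using fh[OF h(1)] fh[OF h(2)] h(3) by auto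
    have v: "\<forall>x \<in> Sk P 0. h x = h' x"
    proof
      fix x assume x: "x \<in> Sk P 0"
      have "h x = IMinus \<longleftrightarrow> h' x = IMinus"
        using vert_char[OF io(1) a(1) a(2) x] vert_char[OF io(2) a(1) a(3) x] by simp
      then show "h x = h' x" using H_vert2[OF io(1) x] H_vert2[OF io(2) x] by auto
    qed
    show "h = h'"
      by (rule extensionalityI[OF ex]) (rule H_det[OF io v])
  qed
  have surj: "SS \<subseteq> f ` A"
  proof
    fix a assume a: "a \<in> SS"
    define Dn where "Dn = {x. x = src a \<or> (x, src a) \<in> upper_lt P 0}"
    have c: "iota_map P I_op (hD Dn) \<and> hD Dn \<in> extensional (faces P) \<and>
         hD Dn ` faces P = faces I_op \<and> hD Dn a = IA" using construct[OF a] Dn_def by simp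
    then have hA: "hD Dn \<in> A" unfolding A_def by auto
    have "f (hD Dn) = a" using fh[OF hA] uniq_a[of "hD Dn" "f (hD Dn)" a] c a by auto
    then show "a \<in> f ` A" using hA by blast
  qed
  have "f ` A = SS" using fh surj by blast
  then have "bij_betw f A SS" using inj unfolding bij_betw_def by blast
  then show ?thesis unfolding A_def SS_def by blast
qed

end
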